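(* Let $X=\bigcup_{n\ge1}X_n$ be a positively graded set. The space $K[T_{\infty,X}]=\bigoplus_{n\ge1}K[T_{n,X}]$ of planar rooted trees with vertices coloured by $X$, with the operations $t\bullet_iw:=t\circ_iw$ (grafting), is a grafting algebra, and it is the free grafting algebra on $X$: for every grafting algebra $A$ and every map $\varphi:X\to A$ with $\varphi(X_n)\subseteq A_n$, there is a unique degree-preserving linear map $\Phi:K[T_{\infty,X}]\to A$ with $\Phi(t\circ_iw)=\Phi(t)\bullet_i\Phi(w)$ for all $t,w$ and $0\le i\le|w|$, and $\Phi(\mathfrak c_n,x)=\varphi(x)$ for $x\in X_n$. In particular the free grafting algebra on one generator of degree $1$ is spanned by planar binary rooted trees.
   Context: A preshuffle algebra is a graded vector space $A=\bigoplus_{n\ge0}A_n$ over a field $K$ with linear maps $\bullet_i:A_n\otimes A_m\to A_{n+m}$ for all $n,m\ge0$ and $0\le i\le m$, such that $(x\bullet_iy)\bullet_jz=x\bullet_{i+j}(y\bullet_jz)$ for all homogeneous $x,y,z$, $0\le i\le|y|$, $0\le j\le|z|$. A grafting algebra is a preshuffle algebra which moreover satisfies $x\bullet_i(y\bullet_jz)=y\bullet_{j+|x|}(x\bullet_iz)$ for all homogeneous $x,y,z$ and $0\le i<j\le|z|$. A planar rooted tree is a planar tree with a root, in which every internal vertex has at least two incoming edges and one outgoing edge; the leaves of a tree with $n+1$ leaves are numbered $0,\dots,n$ from left to right, and the tree has degree $n$ ($n\ge1$). $T_{n,X}$ is the set of planar rooted trees with $n+1$ leaves whose internal vertices are coloured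 by elements of $X$ so that a vertex with $k+1$ incoming edges is coloured by an element of $X_k$. For coloured trees $t,w$ and $0\le i\le|w|$, $t\circ_iw$ is the coloured tree obtained by attaching the root of $t$ to the $i$-th leaf of $w$; it has degree $|t|+|w|$. $(\mathfrak c_n,x)$ denotes the corolla with $n+1$ leaves and one vertex, coloured by $x\in X_n$. *)

theory Defs
  imports Main "HOL-Library.Function_Algebras"
begin

text \<open>The graded
space in the sense of the paper is the (direct) sum of the A n inside 'a.\<close>

definition graded_vs :: "('k::field \<Rightarrow> 'a::ab_group_add \<Rightarrow> 'a) \<Rightarrow> (nat \<Rightarrow> 'a set) \<Rightarrow> bool" where
  "graded_vs sc A \<longleftrightarrow>
     (\<forall>c x y. sc c (x + y) = sc c x + sc c y) \<and>
     (\<forall>c d x. sc (c + d) x = sc c x + sc d x) \<and>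
     (\<forall>c d x. sc c (sc d x) = sc (c * d) x) \<and>
     (\<forall>x. sc 1 x = x) \<and>
     (\<forall>n. 0 \<in> A n \<and> (\<forall>x\<in>A n. \<forall>y\<in>A n. x + y \<in> A n) \<and> (\<forall>c. \<forall>x\<in>A n. sc c x \<in> A n)) \<and>
     (\<forall>N a. finite N \<longrightarrow> (\<forall>n\<in>N. a n \<in> A n) \<longrightarrow> (\<Sum>n\<in>N. a n) = 0 \<longrightarrow> (\<forall>n\<in>N. a n = 0))"

text \<open>op i x y stands for x \<bullet>_i y (defined for homogeneous x, y with i \<le> |y|).\<close>

definition preshuffle_algebra ::
  "('k::field \<Rightarrow> 'a::ab_group_add \<Rightarrow> 'a) \<Rightarrow> (nat \<Rightarrow> 'a set) \<Rightarrow> (nat \<Rightarrow> 'a \<Rightarrow> 'a \<Rightarrow> 'a) \<Rightarrow> bool" where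
  "preshuffle_algebra sc A op \<longleftrightarrow>
     graded_vs sc A \<and>
     (\<forall>i n m x y. x \<in> A n \<longrightarrow> y \<in> A m \<longrightarrow> i \<le> m \<longrightarrow> op i x y \<in> A (n + m)) \<and>
     (\<forall>i n m. i \<le> m \<longrightarrow>
        (\<forall>x\<in>A n. \<forall>x'\<in>A n. \<forall>y\<in>A m. op i (x + x') y = op i x y + op i x' y) \<and>
        (\<forall>x\<in>A n. \<forall>y\<in>A m. \<forall>y'\<in>A m. op i x (y + y') = op i x y + op i x y') \<and>
        (\<forall>c. \<forall>x\<in>A n. \<forall>y\<in>A m. op i (sc c x) y = sc c (op i x y)) \<and>
        (\<forall>c. \<forall>x\<in>A n. \<forall>y\<in>A m. op i x (sc c y) = sc c (op i x y))) \<and>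
     (\<forall>n m p x y z i j. x \<in> A n \<longrightarrow> y \<in> A m \<longrightarrow> z \<in> A p \<longrightarrow> i \<le> m \<longrightarrow> j \<le> p \<longrightarrow>
        op j (op i x y) z = op (i + j) x (op j y z))"

definition grafting_algebra ::
  "('k::field \<Rightarrow> 'a::ab_group_add \<Rightarrow> 'a) \<Rightarrow> (nat \<Rightarrow> 'a set) \<Rightarrow> (nat \<Rightarrow> 'a \<Rightarrow> 'a \<Rightarrow> 'a) \<Rightarrow> bool" where
  "grafting_algebra sc A op \<longleftrightarrow>
     preshuffle_algebra sc A op \<and>
     (\<forall>n m p x y z i j. x \<in> A n \<longrightarrow> y \<in> A m \<longrightarrow> z \<in> A p \<longrightarrow> i < j \<longrightarrow> j \<le> p \<longrightarrow>
        op i x (op j y z) = op (j + n) y (op i x z))"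

datatype 'x tree = Leaf | Node 'x "'x tree list"

fun nleaves :: "'x tree \<Rightarrow> nat" where
  "nleaves Leaf = 1"
| "nleaves (Node x ts) = sum_list (map nleaves ts)"

definition tdeg :: "'x tree \<Rightarrow> nat" where
  "tdeg t = nleaves t - 1"

text \<open>The graded set X is given by a set X with a degree function dg; X_n = {x \<in> X. dg x = n}.
A vertex with k+1 incoming edges must be coloured by an element of X_k.\<close>

fun wf_tree :: "'x set \<Rightarrow> ('x \<Rightarrow> nat) \<Rightarrow> 'x tree \<Rightarrow> bool" where
  "wf_tree X dg Leaf = True"
| "wf_tree X dg (Node x ts) = (x \<in> X \<and> length ts = dg x + 1 \<and> (\<forall>s\<in>set ts. wf_tree X dg s))"

text \<open>T_{n,X}: coloured planar rooted trees with n+1 leaves (the single leaf, which has no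
internal vertex, is excluded: trees in T_\<infinity> have degree \<ge> 1).\<close>

definition Trees :: "'x set \<Rightarrow> ('x \<Rightarrow> nat) \<Rightarrow> nat \<Rightarrow> 'x tree set" where
  "Trees X dg n = {t. t \<noteq> Leaf \<and> wf_tree X dg t \<and> tdeg t = n}"

definition Trees_inf :: "'x set \<Rightarrow> ('x \<Rightarrow> nat) \<Rightarrow> 'x tree set" where
  "Trees_inf X dg = (\<Union>n\<in>{1..}. Trees X dg n)"

text \<open>Grafting t \<circ>_i w: attach the root of t to the i-th leaf (numbered from 0, left to right) of w.\<close>

fun graft :: "'x tree \<Rightarrow> nat \<Rightarrow> 'x tree \<Rightarrow> 'x tree"
and graft_list :: "'x tree \<Rightarrow> nat \<Rightarrow> 'x tree list \<Rightarrow> 'x tree list" where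
  "graft t i Leaf = (if i = 0 then t else Leaf)"
| "graft t i (Node x ts) = Node x (graft_list t i ts)"
| "graft_list t i [] = []"
| "graft_list t i (s # ss) =
     (if i < nleaves s then graft t i s # ss else s # graft_list t (i - nleaves s) ss)"

definition corolla :: "('x \<Rightarrow> nat) \<Rightarrow> 'x \<Rightarrow> 'x tree" where
  "corolla dg x = Node x (replicate (dg x + 1) Leaf)"

fun binary_tree :: "'x tree \<Rightarrow> bool" where
  "binary_tree Leaf = True"
| "binary_tree (Node x ts) = (length ts = 2 \<and> (\<forall>s\<in>set ts. binary_tree s))"

text \<open>Linear combinations of trees are represented as functions 'x tree \<Rightarrow> 'k; the
component K[T_{n,X}] consists of the finitely supported ones supported on T_{n,X}.\<close>

definition tsc :: "'k::field \<Rightarrow> ('x tree \<Rightarrow> 'k) \<Rightarrow> ('x tree \<Rightarrow> 'k)" where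
  "tsc c f = (\<lambda>s. c * f s)"

definition basis_tree :: "'x tree \<Rightarrow> ('x tree \<Rightarrow> 'k::field)" where
  "basis_tree t = (\<lambda>s. if s = t then 1 else 0)"

definition KT :: "'x set \<Rightarrow> ('x \<Rightarrow> nat) \<Rightarrow> nat \<Rightarrow> ('x tree \<Rightarrow> 'k::field) set" where
  "KT X dg n = {f. finite {t. f t \<noteq> 0} \<and> (\<forall>t. f t \<noteq> 0 \<longrightarrow> t \<in> Trees X dg n)}"

definition KT_inf :: "'x set \<Rightarrow> ('x \<Rightarrow> nat) \<Rightarrow> ('x tree \<Rightarrow> 'k::field) set" where
  "KT_inf X dg = {f. finite {t. f t \<noteq> 0} \<and> (\<forall>t. f t \<noteq> 0 \<longrightarrow> t \<in> Trees_inf X dg)}"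

definition graft_op :: "nat \<Rightarrow> ('x tree \<Rightarrow> 'k::field) \<Rightarrow> ('x tree \<Rightarrow> 'k) \<Rightarrow> ('x tree \<Rightarrow> 'k)" where
  "graft_op i f g = (\<lambda>s. \<Sum>(t, w) \<in> {(t, w). f t \<noteq> 0 \<and> g w \<noteq> 0 \<and> graft t i w = s}. f t * g w)"

end

theory Submission
  imports Defs
begin

lemma graft_Leaf_i: "graft t i Leaf = (if i = 0 then t else Leaf)" by simp

lemma length_graft_list[simp]: "length (graft_list t i ss) = length ss"
  by (induction ss arbitrary: i) auto

lemma nleaves_graft_both:
  "i < nleaves w \<Longrightarrow> nleaves (graft t i w) = nleaves w + nleaves t - 1"
  "i < sum_list (map nleaves ss) \<Longrightarrow> sum_list (map nleaves (graft_list t i ss)) = sum_list (map nleaves ss) + nleaves t - 1"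
  by (induction t i w and t i ss rule: graft_graft_list.induct) auto

lemmas nleaves_graft = nleaves_graft_both(1)

lemma wf_graft_both:
  "wf_tree X dg t \<Longrightarrow> wf_tree X dg w \<Longrightarrow> wf_tree X dg (graft t i w)"
  "wf_tree X dg t \<Longrightarrow> (\<forall>s\<in>set ss. wf_tree X dg s) \<Longrightarrow> (\<forall>s\<in>set (graft_list t i ss). wf_tree X dg s)"
  by (induction t i w and t i ss rule: graft_graft_list.induct) auto

lemmas wf_graft = wf_graft_both(1)

lemma graft_not_Leaf: "w \<noteq> Leaf \<Longrightarrow> graft t i w \<noteq> Leaf"
  by (cases w) auto

lemma nleaves_pos: "wf_tree X dg t \<Longrightarrow> nleaves t \<ge> 1"
proof (induction t)
  case Leaf then show ?case by simp
next
  case (Node x ss)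
  then obtain s ss' where ss: "ss = s # ss'" by (cases ss) auto
  with Node have "nleaves s \<ge> 1" by auto
  with ss show ?case by simp
qed

lemma nleaves_ge2: "\<forall>x\<in>X. dg x \<ge> 1 \<Longrightarrow> wf_tree X dg t \<Longrightarrow> t \<noteq> Leaf \<Longrightarrow> nleaves t \<ge> 2"
proof (cases t)
  case (Node x ss)
  assume pos: "\<forall>x\<in>X. dg x \<ge> 1" and wf: "wf_tree X dg t"
  with Node obtain s1 s2 ss' where ss: "ss = s1 # s2 # ss'"
    by (cases ss; cases "tl ss") (auto)
  have "nleaves s1 \<ge> 1" "nleaves s2 \<ge> 1" using wf Node ss nleaves_pos[of X dg s1] nleaves_pos[of X dg s2] by auto
  with ss Node show ?thesis by simp
qed simp

lemma graft_assoc_list: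
  assumes IH: "\<And>s j. s \<in> set ss \<Longrightarrow> j < nleaves s \<Longrightarrow> graft (graft t i w) j s = graft t (i + j) (graft w j s)"
    and i: "i < nleaves w" and j: "j < sum_list (map nleaves ss)"
  shows "graft_list (graft t i w) j ss = graft_list t (i + j) (graft_list w j ss)"
  using IH j
proof (induction ss arbitrary: j)
  case Nil then show ?case by simp
next
  case (Cons s ss)
  show ?case
  proof (cases "j < nleaves s")
    case True
    then have "i + j < nleaves (graft w j s)" using nleaves_graft[OF True, of w] i by simp
    with True Cons.prems(1)[of s j] show ?thesis by simp
  next
    case False
    then have "\<not> i + j < nleaves s" by simp
    moreover have "i + j - nleaves s = i + (j - nleaves s)" using False by simp
    ultimately show ?thesis using False Cons by simp
  qed
qed

lemma graft_assoc:
  "i < nleaves w \<Longrightarrow> j < nleaves u \<Longrightarrow> graft (graft t i w) j u = graft t (i + j) (graft w j u)"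
proof (induction u arbitrary: j)
  case Leaf then show ?case by simp
next
  case (Node x ss)
  then show ?case using graft_assoc_list[of ss t i w j] by simp
qed

lemma graft_comm_list:
  assumes IH: "\<And>s i j. s \<in> set ss \<Longrightarrow> i < j \<Longrightarrow> j < nleaves s \<Longrightarrow>
      graft t i (graft w j s) = graft w (j + (nleaves t - 1)) (graft t i s)"
    and nt: "nleaves t \<ge> 1"
    and ij: "i < j" and j: "j < sum_list (map nleaves ss)"
  shows "graft_list t i (graft_list w j ss) = graft_list w (j + (nleaves t - 1)) (graft_list t i ss)"
  using IH ij j
proof (induction ss arbitrary: i j)
  case Nil then show ?case by simp
next
  case (Cons s ss)
  show ?case
  proof (cases "j < nleaves s")
    case True
    then have "i < nleaves (graft w j s)" using nleaves_graft[OF True, of w] Cons.prems by simp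
    moreover have "i < nleaves s" using True Cons.prems by simp
    moreover have "j + (nleaves t - 1) < nleaves (graft t i s)"
      using nleaves_graft[OF \<open>i < nleaves s\<close>, of t] True nt by simp
    ultimately show ?thesis using True Cons.prems(1)[of s i j] Cons.prems by simp
  next
    case False
    note jF = False
    show ?thesis
    proof (cases "i < nleaves s")
      case True
      have "\<not> j + (nleaves t - 1) < nleaves (graft t i s)"
        using nleaves_graft[OF True, of t] jF nt by simp
      moreover have "j + (nleaves t - 1) - nleaves (graft t i s) = j - nleaves s"
        using nleaves_graft[OF True, of t] jF nt by simp
      ultimately show ?thesis using True jF by simp
    next
      case False
      have "graft_list t (i - nleaves s) (graft_list w (j - nleaves s) ss) =
            graft_list w (j - nleaves s + (nleaves t - 1)) (graft_list t (i - nleaves s) ss)"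
        using Cons False jF by (intro Cons.IH) auto
      moreover have "j - nleaves s + (nleaves t - 1) = j + (nleaves t - 1) - nleaves s" using jF by simp
      ultimately show ?thesis using False jF by simp
    qed
  qed
qed

lemma graft_comm:
  "nleaves t \<ge> 1 \<Longrightarrow> i < j \<Longrightarrow> j < nleaves u \<Longrightarrow>
   graft t i (graft w j u) = graft w (j + (nleaves t - 1)) (graft t i u)"
proof (induction u arbitrary: i j)
  case Leaf then show ?case by simp
next
  case (Node x ss)
  then show ?case using graft_comm_list[of ss t w i j] by simp
qed

definition spt :: "('b \<Rightarrow> 'k::zero) \<Rightarrow> 'b set" where "spt f = {t. f t \<noteq> 0}"

lemma fsum_apply: "(sum F P) s = (\<Sum>p\<in>P. F p s)"
  by (induction P rule: infinite_finite_induct) auto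

lemma graft_op_expand:
  fixes f g :: "'x tree \<Rightarrow> 'k::field"
  assumes S: "finite S" "spt f \<subseteq> S" and T: "finite T" "spt g \<subseteq> T"
  shows "graft_op i f g = (\<Sum>t\<in>S. \<Sum>w\<in>T. tsc (f t * g w) (basis_tree (graft t i w)))"
proof
  fix s
  have "(\<Sum>t\<in>S. \<Sum>w\<in>T. tsc (f t * g w) (basis_tree (graft t i w))) s
      = (\<Sum>t\<in>S. \<Sum>w\<in>T. (if graft t i w = s then f t * g w else 0))"
    by (simp add: fsum_apply tsc_def basis_tree_def eq_commute if_distrib cong: if_cong)
  also have "\<dots> = (\<Sum>p\<in>S \<times> T. (if graft (fst p) i (snd p) = s then f (fst p) * g (snd p) else 0))"
    by (simp add: sum.cartesian_product case_prod_beta)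
  also have "\<dots> = (\<Sum>p\<in>{p\<in>S \<times> T. graft (fst p) i (snd p) = s}. f (fst p) * g (snd p))"
    by (simp add: sum.inter_filter S T)
  also have "\<dots> = (\<Sum>p\<in>{(t, w). f t \<noteq> 0 \<and> g w \<noteq> 0 \<and> graft t i w = s}. f (fst p) * g (snd p))"
  proof (rule sum.mono_neutral_right)
    show "finite {p\<in>S \<times> T. graft (fst p) i (snd p) = s}" using S T by simp
    show "{(t, w). f t \<noteq> 0 \<and> g w \<noteq> 0 \<and> graft t i w = s} \<subseteq> {p\<in>S \<times> T. graft (fst p) i (snd p) = s}"
      using S T by (auto simp: spt_def)
    show "\<forall>p\<in>{p\<in>S \<times> T. graft (fst p) i (snd p) = s} - {(t, w). f t \<noteq> 0 \<and> g w \<noteq> 0 \<and> graft t i w = s}.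
       f (fst p) * g (snd p) = 0" by auto
  qed
  also have "\<dots> = graft_op i f g s"
    by (simp add: graft_op_def case_prod_beta)
  finally show "graft_op i f g s = (\<Sum>t\<in>S. \<Sum>w\<in>T. tsc (f t * g w) (basis_tree (graft t i w))) s" by simp
qed

abbreviation fs :: "('b \<Rightarrow> 'k::zero) \<Rightarrow> bool" where "fs f \<equiv> finite (spt f)"

lemma spt_add: "spt (f + g :: _ \<Rightarrow> 'k::monoid_add) \<subseteq> spt f \<union> spt g" by (auto simp: spt_def)
lemma spt_tsc: "spt (tsc c f) \<subseteq> spt f" by (auto simp: spt_def tsc_def)
lemma spt_basis: "spt (basis_tree t :: _ \<Rightarrow> 'k::field) = {t}" by (auto simp: spt_def basis_tree_def)
lemma spt_zero[simp]: "spt 0 = {}" by (auto simp: spt_def)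
lemma fs_add: "fs f \<Longrightarrow> fs g \<Longrightarrow> fs (f + g :: _ \<Rightarrow> 'k::monoid_add)" by (rule finite_subset[OF spt_add]) simp
lemma fs_tsc: "fs f \<Longrightarrow> fs (tsc c f)" by (rule finite_subset[OF spt_tsc])
lemma fs_basis: "fs (basis_tree t :: _ \<Rightarrow> 'k::field)" by (simp add: spt_basis)
lemma spt_sum: "spt (sum F P) \<subseteq> (\<Union>p\<in>P. spt (F p))"
proof
  fix x assume "x \<in> spt (sum F P)"
  then have "(\<Sum>p\<in>P. F p x) \<noteq> 0" by (simp add: spt_def fsum_apply)
  then obtain p where "p \<in> P" "F p x \<noteq> 0" by (meson sum.neutral)
  then show "x \<in> (\<Union>p\<in>P. spt (F p))" by (auto simp: spt_def)
qed
lemma fs_sum: "finite P \<Longrightarrow> (\<And>p. p \<in> P \<Longrightarrow> fs (F p)) \<Longrightarrow> fs (sum F P)"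
  by (rule finite_subset[OF spt_sum]) auto

lemma tsc_add: "tsc (a + b) v = tsc a v + tsc b v" by (auto simp: tsc_def fun_eq_iff distrib_right)
lemma tsc_add2: "tsc a (v + w) = tsc a v + tsc a w" by (auto simp: tsc_def fun_eq_iff distrib_left)
lemma tsc_tsc: "tsc a (tsc b v) = tsc (a * b) v" by (auto simp: tsc_def fun_eq_iff)
lemma tsc_sum: "tsc a (sum F P) = (\<Sum>p\<in>P. tsc a (F p))"
  by (auto simp: tsc_def fun_eq_iff fsum_apply sum_distrib_left)
lemma tsc_sum2: "tsc (sum c P) v = (\<Sum>p\<in>P. tsc (c p) v)"
  by (auto simp: tsc_def fun_eq_iff fsum_apply sum_distrib_right)
lemma tsc_zero[simp]: "tsc 0 v = 0" "tsc a 0 = 0" by (auto simp: tsc_def fun_eq_iff)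
lemma tsc_apply[simp]: "tsc c f t = c * f t" by (simp add: tsc_def)
lemma tsc_one[simp]: "tsc 1 v = v" by (auto simp: tsc_def fun_eq_iff)

lemma graft_op_add_left:
  fixes f f' g :: "'x tree \<Rightarrow> 'k::field"
  assumes "fs f" "fs f'" "fs g"
  shows "graft_op i (f + f') g = graft_op i f g + graft_op i f' g"
proof -
  let ?S = "spt f \<union> spt f'"
  have e1: "graft_op i (f + f') g = (\<Sum>t\<in>?S. \<Sum>w\<in>spt g. tsc ((f + f') t * g w) (basis_tree (graft t i w)))"
    by (rule graft_op_expand) (use assms spt_add[of f f'] in auto)
  have e2: "graft_op i f g = (\<Sum>t\<in>?S. \<Sum>w\<in>spt g. tsc (f t * g w) (basis_tree (graft t i w)))"
    by (rule graft_op_expand) (use assms in auto)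
  have e3: "graft_op i f' g = (\<Sum>t\<in>?S. \<Sum>w\<in>spt g. tsc (f' t * g w) (basis_tree (graft t i w)))"
    by (rule graft_op_expand) (use assms in auto)
  show ?thesis unfolding e1 e2 e3 by (simp add: distrib_right tsc_add sum.distrib)
qed

lemma graft_op_add_right:
  fixes f g g' :: "'x tree \<Rightarrow> 'k::field"
  assumes "fs f" "fs g" "fs g'"
  shows "graft_op i f (g + g') = graft_op i f g + graft_op i f g'"
proof -
  let ?T = "spt g \<union> spt g'"
  have e1: "graft_op i f (g + g') = (\<Sum>t\<in>spt f. \<Sum>w\<in>?T. tsc (f t * (g + g') w) (basis_tree (graft t i w)))"
    by (rule graft_op_expand) (use assms spt_add[of g g'] in auto)
  have e2: "graft_op i f g = (\<Sum>t\<in>spt f. \<Sum>w\<in>?T. tsc (f t * g w) (basis_tree (graft t i w)))"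
    by (rule graft_op_expand) (use assms in auto)
  have e3: "graft_op i f g' = (\<Sum>t\<in>spt f. \<Sum>w\<in>?T. tsc (f t * g' w) (basis_tree (graft t i w)))"
    by (rule graft_op_expand) (use assms in auto)
  show ?thesis unfolding e1 e2 e3 by (simp add: distrib_left tsc_add sum.distrib)
qed

lemma graft_op_tsc_left:
  fixes f g :: "'x tree \<Rightarrow> 'k::field"
  assumes "fs f" "fs g"
  shows "graft_op i (tsc c f) g = tsc c (graft_op i f g)"
proof -
  have e1: "graft_op i (tsc c f) g = (\<Sum>t\<in>spt f. \<Sum>w\<in>spt g. tsc (tsc c f t * g w) (basis_tree (graft t i w)))"
    by (rule graft_op_expand) (use assms spt_tsc in auto)
  have e2: "graft_op i f g = (\<Sum>t\<in>spt f. \<Sum>w\<in>spt g. tsc (f t * g w) (basis_tree (graft t i w)))"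
    by (rule graft_op_expand) (use assms in auto)
  show ?thesis unfolding e1 e2 by (simp add: tsc_sum tsc_tsc mult_ac)
qed

lemma graft_op_tsc_right:
  fixes f g :: "'x tree \<Rightarrow> 'k::field"
  assumes "fs f" "fs g"
  shows "graft_op i f (tsc c g) = tsc c (graft_op i f g)"
proof -
  have e1: "graft_op i f (tsc c g) = (\<Sum>t\<in>spt f. \<Sum>w\<in>spt g. tsc (f t * tsc c g w) (basis_tree (graft t i w)))"
    by (rule graft_op_expand) (use assms spt_tsc in auto)
  have e2: "graft_op i f g = (\<Sum>t\<in>spt f. \<Sum>w\<in>spt g. tsc (f t * g w) (basis_tree (graft t i w)))"
    by (rule graft_op_expand) (use assms in auto)
  show ?thesis unfolding e1 e2 by (simp add: tsc_sum tsc_tsc mult_ac)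
qed

lemma graft_op_basis: "graft_op i (basis_tree a) (basis_tree b :: _ \<Rightarrow> 'k::field) = basis_tree (graft a i b)"
proof -
  have "graft_op i (basis_tree a) (basis_tree b :: _ \<Rightarrow> 'k::field) = (\<Sum>t\<in>{a}. \<Sum>w\<in>{b}. tsc (basis_tree a t * basis_tree b w) (basis_tree (graft t i w)))"
    by (rule graft_op_expand) (auto simp: spt_basis)
  then show ?thesis by (simp add: basis_tree_def)
qed

lemma graft_op_zero[simp]: "graft_op i 0 g = 0" "graft_op i f 0 = 0"
  by (auto simp: graft_op_def fun_eq_iff)

lemma spt_graft_op: "spt (graft_op i f g) \<subseteq> (\<lambda>(t, w). graft t i w) ` (spt f \<times> spt g)"
proof
  fix s assume "s \<in> spt (graft_op i f g)"
  then have ne: "graft_op i f g s \<noteq> 0" by (simp add: spt_def)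
  have "{(t, w). f t \<noteq> 0 \<and> g w \<noteq> 0 \<and> graft t i w = s} \<noteq> {}"
  proof
    assume e: "{(t, w). f t \<noteq> 0 \<and> g w \<noteq> 0 \<and> graft t i w = s} = {}"
    have "graft_op i f g s = 0" unfolding graft_op_def e by simp
    with ne show False by simp
  qed
  then show "s \<in> (\<lambda>(t, w). graft t i w) ` (spt f \<times> spt g)" by (auto simp: spt_def)
qed

lemma fs_graft_op: "fs f \<Longrightarrow> fs g \<Longrightarrow> fs (graft_op i f g)"
  by (rule finite_subset[OF spt_graft_op]) auto

lemma basis_decomp:
  fixes f :: "'x tree \<Rightarrow> 'k::field"
  assumes "fs f" shows "f = (\<Sum>t\<in>spt f. tsc (f t) (basis_tree t))"
proof
  fix s
  have "(\<Sum>t\<in>spt f. tsc (f t) (basis_tree t)) s = (\<Sum>t\<in>spt f. if s = t then f t else 0)"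
    by (simp add: fsum_apply tsc_def basis_tree_def if_distrib cong: if_cong)
  also have "\<dots> = f s" using assms by (simp add: sum.delta spt_def)
  finally show "f s = (\<Sum>t\<in>spt f. tsc (f t) (basis_tree t)) s" by simp
qed

lemma graft_op_sum_left:
  fixes F :: "'p \<Rightarrow> 'x tree \<Rightarrow> 'k::field"
  assumes "finite P" "\<And>p. p \<in> P \<Longrightarrow> fs (F p)" "fs g"
  shows "graft_op i (sum F P) g = (\<Sum>p\<in>P. graft_op i (F p) g)"
  using assms by (induction P rule: finite_induct) (auto simp: graft_op_add_left fs_sum)

lemma graft_op_sum_right:
  fixes G :: "'p \<Rightarrow> 'x tree \<Rightarrow> 'k::field"
  assumes "finite Q" "\<And>q. q \<in> Q \<Longrightarrow> fs (G q)" "fs f"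
  shows "graft_op i f (sum G Q) = (\<Sum>q\<in>Q. graft_op i f (G q))"
  using assms by (induction Q rule: finite_induct) (auto simp: graft_op_add_right fs_sum)

lemma graft_op_bsum:
  fixes c :: "'p \<Rightarrow> 'k::field" and d :: "'q \<Rightarrow> 'k"
  assumes "finite P" "finite Q"
  shows "graft_op i (\<Sum>p\<in>P. tsc (c p) (basis_tree (a p))) (\<Sum>q\<in>Q. tsc (d q) (basis_tree (b q)))
       = (\<Sum>p\<in>P. \<Sum>q\<in>Q. tsc (c p * d q) (basis_tree (graft (a p) i (b q))))"
proof -
  have fsG: "fs (\<Sum>q\<in>Q. tsc (d q) (basis_tree (b q)))"
    using assms by (intro fs_sum fs_tsc fs_basis)
  have "graft_op i (\<Sum>p\<in>P. tsc (c p) (basis_tree (a p))) (\<Sum>q\<in>Q. tsc (d q) (basis_tree (b q)))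
      = (\<Sum>q\<in>Q. tsc (d q) (\<Sum>p\<in>P. tsc (c p) (graft_op i (basis_tree (a p)) (basis_tree (b q)))))"
    using assms fsG
    by (simp add: graft_op_sum_left graft_op_sum_right graft_op_tsc_left graft_op_tsc_right
        fs_tsc fs_basis fs_sum)
  also have "\<dots> = (\<Sum>p\<in>P. \<Sum>q\<in>Q. tsc (c p * d q) (basis_tree (graft (a p) i (b q))))"
    by (simp add: graft_op_basis tsc_sum tsc_tsc) (subst sum.swap, simp add: mult.commute)
  finally show ?thesis .
qed

lemma sum_times: "(\<Sum>p\<in>A \<times> B. F p) = (\<Sum>a\<in>A. \<Sum>b\<in>B. F (a, b))"
  by (simp add: sum.cartesian_product)

lemma KT_fs: "f \<in> KT X dg n \<Longrightarrow> fs f" by (simp add: KT_def spt_def)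
lemma KT_spt: "f \<in> KT X dg n \<Longrightarrow> t \<in> spt f \<Longrightarrow> t \<in> Trees X dg n" by (simp add: KT_def spt_def)
lemma KT_zero: "0 \<in> KT X dg n" by (simp add: KT_def)
lemma KT_add: "f \<in> KT X dg n \<Longrightarrow> g \<in> KT X dg n \<Longrightarrow> f + g \<in> KT X dg n"
  unfolding KT_def
proof (safe)
  assume "finite {t. f t \<noteq> 0}" "finite {t. g t \<noteq> 0}"
  then show "finite {t. (f + g) t \<noteq> 0}"
    by (rule rev_finite_subset[OF finite_Un[THEN iffD2], OF conjI]) auto
next
  fix t assume "\<forall>t. f t \<noteq> 0 \<longrightarrow> t \<in> Trees X dg n" "\<forall>t. g t \<noteq> 0 \<longrightarrow> t \<in> Trees X dg n"
    "(f + g) t \<noteq> 0"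
  then show "t \<in> Trees X dg n" by (cases "f t = 0") auto
qed
lemma KT_tsc: "f \<in> KT X dg n \<Longrightarrow> tsc c f \<in> KT X dg n"
  unfolding KT_def by (auto elim: rev_finite_subset)
lemma KT_basis: "t \<in> Trees X dg n \<Longrightarrow> (basis_tree t :: _ \<Rightarrow> 'k::field) \<in> KT X dg n"
  by (simp add: KT_def basis_tree_def)
lemma KT_sum: "finite P \<Longrightarrow> (\<And>p. p \<in> P \<Longrightarrow> F p \<in> KT X dg n) \<Longrightarrow> sum F P \<in> KT X dg n"
  by (induction P rule: finite_induct) (auto intro: KT_add KT_zero)

lemma Trees_nleaves: "t \<in> Trees X dg n \<Longrightarrow> nleaves t = n + 1"
  unfolding Trees_def tdeg_def using nleaves_pos[of X dg t] by auto

lemma graft_Trees: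
  assumes t: "t \<in> Trees X dg n" and w: "w \<in> Trees X dg m" and i: "i \<le> m"
  shows "graft t i w \<in> Trees X dg (n + m)"
proof -
  have nt: "nleaves t = n + 1" and nw: "nleaves w = m + 1" using t w Trees_nleaves by auto
  have "i < nleaves w" using nw i by simp
  from nleaves_graft[OF this, of t] nt nw have "nleaves (graft t i w) = n + m + 1" by simp
  moreover have "graft t i w \<noteq> Leaf" using w by (intro graft_not_Leaf) (simp add: Trees_def)
  moreover have "wf_tree X dg (graft t i w)" using t w by (intro wf_graft) (simp_all add: Trees_def)
  ultimately show ?thesis by (simp add: Trees_def tdeg_def)
qed

lemma graft_op_pexpand:
  fixes f g :: "'x tree \<Rightarrow> 'k::field"
  assumes "fs f" "fs g"
  shows "graft_op i f g = (\<Sum>p\<in>spt f \<times> spt g. tsc (f (fst p) * g (snd p)) (basis_tree (graft (fst p) i (snd p))))"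
  unfolding sum_times using assms by (simp add: graft_op_expand)

lemma graft_op_KT:
  assumes f: "f \<in> KT X dg n" and g: "g \<in> KT X dg m" and i: "i \<le> m"
  shows "graft_op i f g \<in> KT X dg (n + m)"
  unfolding graft_op_pexpand[OF KT_fs[OF f] KT_fs[OF g]]
  by (rule KT_sum) (auto simp: KT_fs[OF f] KT_fs[OF g] intro!: KT_tsc KT_basis graft_Trees KT_spt[OF f] KT_spt[OF g] i)

lemma graft_op_assoc_KT:
  fixes f g h :: "'x tree \<Rightarrow> 'k::field"
  assumes f: "f \<in> KT X dg n" and g: "g \<in> KT X dg m" and h: "h \<in> KT X dg p"
    and i: "i \<le> m" and j: "j \<le> p"
  shows "graft_op j (graft_op i f g) h = graft_op (i + j) f (graft_op j g h)"
proof -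
  have ff: "fs f" "fs g" "fs h" using f g h KT_fs by auto
  have hd: "h = (\<Sum>u\<in>spt h. tsc (h u) (basis_tree u))" using basis_decomp ff by blast
  have fd: "f = (\<Sum>u\<in>spt f. tsc (f u) (basis_tree u))" using basis_decomp ff by blast
  have "graft_op j (graft_op i f g) h =
     graft_op j (\<Sum>q\<in>spt f \<times> spt g. tsc (f (fst q) * g (snd q)) (basis_tree (graft (fst q) i (snd q))))
       (\<Sum>u\<in>spt h. tsc (h u) (basis_tree u))"
    using graft_op_pexpand[OF ff(1,2)] hd by simp
  also have "\<dots> = (\<Sum>q\<in>spt f \<times> spt g. \<Sum>u\<in>spt h. tsc (f (fst q) * g (snd q) * h u)
        (basis_tree (graft (graft (fst q) i (snd q)) j u)))"
    by (rule graft_op_bsum) (use ff in auto)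
  also have "\<dots> = (\<Sum>t\<in>spt f. \<Sum>w\<in>spt g. \<Sum>u\<in>spt h. tsc (f t * g w * h u)
        (basis_tree (graft (graft t i w) j u)))"
    by (simp add: sum_times)
  also have "\<dots> = (\<Sum>t\<in>spt f. \<Sum>w\<in>spt g. \<Sum>u\<in>spt h. tsc (f t * g w * h u)
        (basis_tree (graft t (i + j) (graft w j u))))"
  proof (intro sum.cong refl arg_cong[where f = "tsc _"] arg_cong[where f = basis_tree])
    fix t w u assume "w \<in> spt g" "u \<in> spt h"
    then have "nleaves w = m + 1" "nleaves u = p + 1"
      using KT_spt[OF g] KT_spt[OF h] Trees_nleaves by blast+
    then show "graft (graft t i w) j u = graft t (i + j) (graft w j u)"
      using i j by (intro graft_assoc) auto
  qed
  also have "\<dots> = (\<Sum>t\<in>spt f. \<Sum>q\<in>spt g \<times> spt h. tsc (f t * (g (fst q) * h (snd q)))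
        (basis_tree (graft t (i + j) (graft (fst q) j (snd q)))))"
    by (simp add: sum_times mult.assoc)
  also have "\<dots> = graft_op (i + j) (\<Sum>u\<in>spt f. tsc (f u) (basis_tree u))
       (\<Sum>q\<in>spt g \<times> spt h. tsc (g (fst q) * h (snd q)) (basis_tree (graft (fst q) j (snd q))))"
    by (rule graft_op_bsum[symmetric]) (use ff in auto)
  also have "\<dots> = graft_op (i + j) f (graft_op j g h)"
    using graft_op_pexpand[OF ff(2,3)] fd[symmetric] by simp
  finally show ?thesis .
qed

lemma graft_op_comm_KT:
  fixes f g h :: "'x tree \<Rightarrow> 'k::field"
  assumes f: "f \<in> KT X dg n" and g: "g \<in> KT X dg m" and h: "h \<in> KT X dg p"
    and ij: "i < j" and j: "j \<le> p"
  shows "graft_op i f (graft_op j g h) = graft_op (j + n) g (graft_op i f h)"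
proof -
  have ff: "fs f" "fs g" "fs h" using f g h KT_fs by auto
  have fd: "f = (\<Sum>u\<in>spt f. tsc (f u) (basis_tree u))" using basis_decomp ff by blast
  have gd: "g = (\<Sum>u\<in>spt g. tsc (g u) (basis_tree u))" using basis_decomp ff by blast
  have "graft_op i f (graft_op j g h) = graft_op i (\<Sum>u\<in>spt f. tsc (f u) (basis_tree u))
       (\<Sum>q\<in>spt g \<times> spt h. tsc (g (fst q) * h (snd q)) (basis_tree (graft (fst q) j (snd q))))"
    using graft_op_pexpand[OF ff(2,3)] fd[symmetric] by simp
  also have "\<dots> = (\<Sum>t\<in>spt f. \<Sum>q\<in>spt g \<times> spt h. tsc (f t * (g (fst q) * h (snd q)))
        (basis_tree (graft t i (graft (fst q) j (snd q)))))"
    by (rule graft_op_bsum) (use ff in auto)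
  also have "\<dots> = (\<Sum>t\<in>spt f. \<Sum>w\<in>spt g. \<Sum>u\<in>spt h. tsc (g w * (f t * h u))
        (basis_tree (graft w (j + n) (graft t i u))))"
  proof (simp add: sum_times, intro sum.cong refl)
    fix t w u assume "t \<in> spt f" "u \<in> spt h"
    then have "nleaves t = n + 1" "nleaves u = p + 1"
      using KT_spt[OF f] KT_spt[OF h] Trees_nleaves by blast+
    then have "graft t i (graft w j u) = graft w (j + n) (graft t i u)"
      using ij j graft_comm[of t i j u w] by auto
    then show "tsc (f t * (g w * h u)) (basis_tree (graft t i (graft w j u))) =
               tsc (g w * (f t * h u)) (basis_tree (graft w (j + n) (graft t i u)))"
      by (simp add: mult_ac)
  qed
  also have "\<dots> = (\<Sum>w\<in>spt g. \<Sum>t\<in>spt f. \<Sum>u\<in>spt h. tsc (g w * (f t * h u))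
        (basis_tree (graft w (j + n) (graft t i u))))"
    by (rule sum.swap)
  also have "\<dots> = (\<Sum>w\<in>spt g. \<Sum>q\<in>spt f \<times> spt h. tsc (g w * (f (fst q) * h (snd q)))
        (basis_tree (graft w (j + n) (graft (fst q) i (snd q)))))"
    by (simp add: sum_times)
  also have "\<dots> = graft_op (j + n) (\<Sum>u\<in>spt g. tsc (g u) (basis_tree u))
       (\<Sum>q\<in>spt f \<times> spt h. tsc (f (fst q) * h (snd q)) (basis_tree (graft (fst q) i (snd q))))"
    by (rule graft_op_bsum[symmetric]) (use ff in auto)
  also have "\<dots> = graft_op (j + n) g (graft_op i f h)"
    using graft_op_pexpand[OF ff(1,3)] gd[symmetric] by simp
  finally show ?thesis .
qed

lemma KT_direct:
  assumes N: "finite N" and a: "\<forall>n\<in>N. a n \<in> KT X dg n" and s: "(\<Sum>n\<in>N. a n) = 0" and n: "n \<in> N"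
  shows "a n = 0"
proof (rule ccontr)
  assume "a n \<noteq> 0"
  then obtain t where t: "a n t \<noteq> 0" using fun_eq_iff[of "a n" 0] by auto
  then have tn: "tdeg t = n" using a n by (auto simp: KT_def Trees_def)
  have "(\<Sum>m\<in>N. a m t) = a n t + (\<Sum>m\<in>N - {n}. a m t)" using N n by (simp add: sum.remove)
  also have "(\<Sum>m\<in>N - {n}. a m t) = 0"
  proof (rule sum.neutral, rule ballI, rule ccontr)
    fix m assume m: "m \<in> N - {n}" "a m t \<noteq> 0"
    then have "tdeg t = m" using a by (auto simp: KT_def Trees_def)
    with tn m show False by simp
  qed
  finally have "(\<Sum>m\<in>N. a m t) \<noteq> 0" using t by simp
  with s show False by (simp add: fsum_apply[symmetric])
qed

lemma KT_grafting:
  fixes X :: "'x set"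
  shows "grafting_algebra (tsc :: 'k::field \<Rightarrow> _) (KT X dg) graft_op"
proof -
  have d: "\<forall>N a. finite N \<longrightarrow> (\<forall>n\<in>N. a n \<in> KT X dg n) \<longrightarrow> (\<Sum>n\<in>N. a n) = (0 :: 'x tree \<Rightarrow> 'k) \<longrightarrow> (\<forall>n\<in>N. a n = 0)"
    using KT_direct by blast
  have cl: "\<forall>n. 0 \<in> KT X dg n \<and> (\<forall>x\<in>KT X dg n. \<forall>y\<in>KT X dg n. x + y \<in> KT X dg n) \<and> (\<forall>c::'k. \<forall>x\<in>KT X dg n. tsc c x \<in> KT X dg n)"
    using KT_zero KT_add KT_tsc by blast
  have gv: "graded_vs (tsc :: 'k::field \<Rightarrow> _) (KT X dg)"
    unfolding graded_vs_def using d cl tsc_add2 tsc_add tsc_tsc tsc_one by blast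
  have m: "\<forall>i n m x y. x \<in> KT X dg n \<longrightarrow> y \<in> KT X dg m \<longrightarrow> i \<le> m \<longrightarrow> graft_op i x y \<in> KT X dg (n + m)"
    using graft_op_KT by blast
  have bl: "\<forall>i n m. i \<le> m \<longrightarrow>
        (\<forall>x\<in>KT X dg n. \<forall>x'\<in>KT X dg n. \<forall>y\<in>KT X dg m. graft_op i (x + x') y = graft_op i x y + graft_op i x' (y :: 'x tree \<Rightarrow> 'k)) \<and>
        (\<forall>x\<in>KT X dg n. \<forall>y\<in>KT X dg m. \<forall>y'\<in>KT X dg m. graft_op i x (y + y') = graft_op i x y + graft_op i x y') \<and>
        (\<forall>c. \<forall>x\<in>KT X dg n. \<forall>y\<in>KT X dg m. graft_op i (tsc c x) y = tsc c (graft_op i x y)) \<and>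
        (\<forall>c. \<forall>x\<in>KT X dg n. \<forall>y\<in>KT X dg m. graft_op i x (tsc c y) = tsc c (graft_op i x y))"
    by (meson KT_fs graft_op_add_left graft_op_add_right graft_op_tsc_left graft_op_tsc_right)
  have a: "\<forall>n m p x y z i j. x \<in> KT X dg n \<longrightarrow> y \<in> KT X dg m \<longrightarrow> z \<in> KT X dg p \<longrightarrow> i \<le> m \<longrightarrow> j \<le> p \<longrightarrow>
        graft_op j (graft_op i x y) z = graft_op (i + j) x (graft_op j y (z :: 'x tree \<Rightarrow> 'k))"
    using graft_op_assoc_KT by blast
  have c: "\<forall>n m p x y z i j. x \<in> KT X dg n \<longrightarrow> y \<in> KT X dg m \<longrightarrow> z \<in> KT X dg p \<longrightarrow> i < j \<longrightarrow> j \<le> p \<longrightarrow>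
        graft_op i x (graft_op j y z) = graft_op (j + n) y (graft_op i x (z :: 'x tree \<Rightarrow> 'k))"
    using graft_op_comm_KT by blast
  show ?thesis unfolding grafting_algebra_def preshuffle_algebra_def using gv m bl a c by blast
qed

fun fillL :: "(nat \<Rightarrow> 'a \<Rightarrow> 'a \<Rightarrow> 'a) \<Rightarrow> 'a \<Rightarrow> nat \<Rightarrow> 'a option list \<Rightarrow> 'a" where
  "fillL op a k [] = a"
| "fillL op a k (None # xs) = fillL op a (Suc k) xs"
| "fillL op a k (Some v # xs) = op k v (fillL op a (Suc k) xs)"

fun Phio :: "(nat \<Rightarrow> 'a \<Rightarrow> 'a \<Rightarrow> 'a) \<Rightarrow> ('x \<Rightarrow> 'a) \<Rightarrow> 'x tree \<Rightarrow> 'a option" where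
  "Phio op \<phi> Leaf = None"
| "Phio op \<phi> (Node x ss) = Some (fillL op (\<phi> x) 0 (map (Phio op \<phi>) ss))"

definition Phit :: "(nat \<Rightarrow> 'a \<Rightarrow> 'a \<Rightarrow> 'a) \<Rightarrow> ('x \<Rightarrow> 'a) \<Rightarrow> 'x tree \<Rightarrow> 'a" where
  "Phit op \<phi> t = the (Phio op \<phi> t)"

lemma Phio_Some: "t \<noteq> Leaf \<Longrightarrow> Phio op \<phi> t = Some (Phit op \<phi> t)"
  by (cases t) (auto simp: Phit_def)

lemma Phit_Node: "Phit op \<phi> (Node x ss) = fillL op (\<phi> x) 0 (map (Phio op \<phi>) ss)"
  by (simp add: Phit_def)

lemma ga_vs:
  assumes "grafting_algebra sc A op"
  shows "graded_vs sc A"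
  using assms unfolding grafting_algebra_def preshuffle_algebra_def by (elim conjE) assumption

lemma ga_memf:
  assumes "grafting_algebra sc A op"
  shows "\<forall>i n m x y. x \<in> A n \<longrightarrow> y \<in> A m \<longrightarrow> i \<le> m \<longrightarrow> op i x y \<in> A (n + m)"
  using assms unfolding grafting_algebra_def preshuffle_algebra_def by (elim conjE) assumption

lemma ga_bil:
  assumes "grafting_algebra sc A op"
  shows "\<forall>i n m. i \<le> m \<longrightarrow>
        (\<forall>x\<in>A n. \<forall>x'\<in>A n. \<forall>y\<in>A m. op i (x + x') y = op i x y + op i x' y) \<and>
        (\<forall>x\<in>A n. \<forall>y\<in>A m. \<forall>y'\<in>A m. op i x (y + y') = op i x y + op i x y') \<and>
        (\<forall>c. \<forall>x\<in>A n. \<forall>y\<in>A m. op i (sc c x) y = sc c (op i x y)) \<and>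
        (\<forall>c. \<forall>x\<in>A n. \<forall>y\<in>A m. op i x (sc c y) = sc c (op i x y))"
  using assms unfolding grafting_algebra_def preshuffle_algebra_def by (elim conjE) assumption

lemma ga_assf:
  assumes "grafting_algebra sc A op"
  shows "\<forall>n m p x y z i j. x \<in> A n \<longrightarrow> y \<in> A m \<longrightarrow> z \<in> A p \<longrightarrow> i \<le> m \<longrightarrow> j \<le> p \<longrightarrow>
        op j (op i x y) z = op (i + j) x (op j y z)"
  using assms unfolding grafting_algebra_def preshuffle_algebra_def by (elim conjE) assumption

lemma ga_commf:
  assumes "grafting_algebra sc A op"
  shows "\<forall>n m p x y z i j. x \<in> A n \<longrightarrow> y \<in> A m \<longrightarrow> z \<in> A p \<longrightarrow> i < j \<longrightarrow> j \<le> p \<longrightarrow>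
        op i x (op j y z) = op (j + n) y (op i x z)"
  using assms unfolding grafting_algebra_def preshuffle_algebra_def by (elim conjE) assumption

lemma ga_mem: "grafting_algebra sc A op \<Longrightarrow> x \<in> A n \<Longrightarrow> y \<in> A m \<Longrightarrow> i \<le> m \<Longrightarrow> op i x y \<in> A (n + m)"
  using ga_memf by blast
lemma ga_assoc: "grafting_algebra sc A op \<Longrightarrow> x \<in> A n \<Longrightarrow> y \<in> A m \<Longrightarrow> z \<in> A p \<Longrightarrow> i \<le> m \<Longrightarrow> j \<le> p \<Longrightarrow>
    op j (op i x y) z = op (i + j) x (op j y z)"
  using ga_assf by blast
lemma ga_comm: "grafting_algebra sc A op \<Longrightarrow> x \<in> A n \<Longrightarrow> y \<in> A m \<Longrightarrow> z \<in> A p \<Longrightarrow> i < j \<Longrightarrow> j \<le> p \<Longrightarrow>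
    op i x (op j y z) = op (j + n) y (op i x z)"
  using ga_commf by blast

lemma sum_nleaves: "(\<forall>s\<in>set ss. wf_tree X dg s) \<Longrightarrow> sum_list (map nleaves ss) = sum_list (map tdeg ss) + length ss"
proof (induction ss)
  case (Cons s ss)
  then have "nleaves s \<ge> 1" using nleaves_pos[of X dg s] by simp
  with Cons show ?case by (simp add: tdeg_def)
qed simp

lemma fill_deg:
  assumes G: "grafting_algebra sc A op" and a: "a \<in> A p"
    and ss: "\<forall>s\<in>set ss. s \<noteq> Leaf \<longrightarrow> Phit op \<phi> s \<in> A (tdeg s)"
    and k: "k + length ss \<le> p + 1"
  shows "fillL op a k (map (Phio op \<phi>) ss) \<in> A (p + sum_list (map tdeg ss))"
  using ss k
proof (induction ss arbitrary: k)
  case Nil then show ?case using a by simp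
next
  case (Cons s ss)
  show ?case
  proof (cases "s = Leaf")
    case True
    then show ?thesis using Cons by (simp add: tdeg_def)
  next
    case False
    have Z: "fillL op a (Suc k) (map (Phio op \<phi>) ss) \<in> A (p + sum_list (map tdeg ss))"
      using Cons by simp
    have S: "Phit op \<phi> s \<in> A (tdeg s)" using Cons False by simp
    have "op k (Phit op \<phi> s) (fillL op a (Suc k) (map (Phio op \<phi>) ss)) \<in> A (tdeg s + (p + sum_list (map tdeg ss)))"
      using Cons.prems by (intro ga_mem[OF G S Z]) simp
    then show ?thesis using False by (simp add: Phio_Some add_ac)
  qed
qed

lemma Phit_deg:
  assumes G: "grafting_algebra sc A op" and ph: "\<forall>x\<in>X. \<phi> x \<in> A (dg x)"
  shows "wf_tree X dg t \<Longrightarrow> t \<noteq> Leaf \<Longrightarrow> Phit op \<phi> t \<in> A (tdeg t)"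
proof (induction t)
  case Leaf then show ?case by simp
next
  case (Node x ss)
  have wf: "\<forall>s\<in>set ss. wf_tree X dg s" and x: "x \<in> X" and len: "length ss = dg x + 1" using Node.prems by auto
  have "fillL op (\<phi> x) 0 (map (Phio op \<phi>) ss) \<in> A (dg x + sum_list (map tdeg ss))"
    by (rule fill_deg[OF G]) (use ph x Node wf len in auto)
  moreover have "tdeg (Node x ss) = dg x + sum_list (map tdeg ss)"
    using sum_nleaves[OF wf] len by (simp add: tdeg_def)
  ultimately show ?case by (simp add: Phit_Node)
qed

lemma fill_graft:
  assumes G: "grafting_algebra sc A op" and a: "a \<in> A p"
    and T: "Phit op \<phi> t \<in> A (tdeg t)" and tL: "t \<noteq> Leaf"
    and ss: "\<forall>s\<in>set ss. wf_tree X dg s \<and> (s \<noteq> Leaf \<longrightarrow> Phit op \<phi> s \<in> A (tdeg s)) \<and>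
        (s \<noteq> Leaf \<longrightarrow> (\<forall>i'. i' < nleaves s \<longrightarrow> Phit op \<phi> (graft t i' s) = op i' (Phit op \<phi> t) (Phit op \<phi> s)))"
    and k: "k + length ss \<le> p + 1" and ki: "k \<le> i" and ik: "i < k + sum_list (map nleaves ss)"
  shows "op i (Phit op \<phi> t) (fillL op a k (map (Phio op \<phi>) ss)) = fillL op a k (map (Phio op \<phi>) (graft_list t (i - k) ss))"
  using ss k ki ik
proof (induction ss arbitrary: k i)
  case Nil then show ?case by simp
next
  case (Cons s ss)
  let ?T = "Phit op \<phi> t"
  let ?Z = "fillL op a (Suc k) (map (Phio op \<phi>) ss)"
  have wfs: "\<forall>s\<in>set ss. wf_tree X dg s" using Cons.prems by auto
  have Z: "?Z \<in> A (p + sum_list (map tdeg ss))"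
    by (rule fill_deg[OF G a]) (use Cons.prems in auto)
  have nss: "sum_list (map nleaves ss) = sum_list (map tdeg ss) + length ss" using sum_nleaves[OF wfs] .
  have kp: "k \<le> p + sum_list (map tdeg ss)" using Cons.prems by simp
  show ?case
  proof (cases "i - k < nleaves s")
    case True
    show ?thesis
    proof (cases "s = Leaf")
      case True
      with \<open>i - k < nleaves s\<close> Cons.prems have "i = k" by simp
      then show ?thesis using True tL by (simp add: Phio_Some)
    next
      case False
      let ?S = "Phit op \<phi> s"
      have S: "?S \<in> A (tdeg s)" and IHs: "Phit op \<phi> (graft t (i - k) s) = op (i - k) ?T ?S"
        using Cons.prems False True by auto
      have "i - k \<le> tdeg s" using True by (simp add: tdeg_def)
      then have "op k (op (i - k) ?T ?S) ?Z = op (i - k + k) ?T (op k ?S ?Z)"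
        by (intro ga_assoc[OF G T S Z] kp)
      moreover have "i - k + k = i" using Cons.prems by simp
      moreover have "graft t (i - k) s \<noteq> Leaf" using False by (intro graft_not_Leaf)
      ultimately show ?thesis using True False IHs by (simp add: Phio_Some)
    qed
  next
    case False
    show ?thesis
    proof (cases "s = Leaf")
      case True
      have "op i ?T ?Z = fillL op a (Suc k) (map (Phio op \<phi>) (graft_list t (i - Suc k) ss))"
        by (rule Cons.IH) (use Cons.prems True False in auto)
      moreover have "i - k - 1 = i - Suc k" by simp
      ultimately show ?thesis using True False by simp
    next
      case sL: False
      let ?S = "Phit op \<phi> s"
      let ?m = "tdeg s"
      have S: "?S \<in> A ?m" using Cons.prems sL by auto
      have ns: "nleaves s = ?m + 1" using Cons.prems nleaves_pos[of X dg s] by (auto simp: tdeg_def)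
      have c1: "k < i - ?m" using False ns by simp
      have c2: "i - ?m \<le> p + sum_list (map tdeg ss)" using Cons.prems ns nss by simp
      have "op k ?S (op (i - ?m) ?T ?Z) = op (i - ?m + ?m) ?T (op k ?S ?Z)"
        by (rule ga_comm[OF G S T Z c1 c2])
      moreover have "i - ?m + ?m = i" using False ns by simp
      moreover have "op (i - ?m) ?T ?Z = fillL op a (Suc k) (map (Phio op \<phi>) (graft_list t (i - ?m - Suc k) ss))"
        by (rule Cons.IH) (use Cons.prems c1 ns in auto)
      moreover have "i - k - nleaves s = i - ?m - Suc k" using ns by simp
      ultimately show ?thesis using False sL by (simp add: Phio_Some)
    qed
  qed
qed

lemma Phit_graft:
  assumes G: "grafting_algebra sc A op" and ph: "\<forall>x\<in>X. \<phi> x \<in> A (dg x)"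
    and t: "wf_tree X dg t" "t \<noteq> Leaf"
  shows "wf_tree X dg w \<Longrightarrow> w \<noteq> Leaf \<Longrightarrow> i < nleaves w \<Longrightarrow>
     Phit op \<phi> (graft t i w) = op i (Phit op \<phi> t) (Phit op \<phi> w)"
proof (induction w arbitrary: i)
  case Leaf then show ?case by simp
next
  case (Node x ws)
  have wf: "\<forall>s\<in>set ws. wf_tree X dg s" and x: "x \<in> X" and len: "length ws = dg x + 1" using Node.prems by auto
  have T: "Phit op \<phi> t \<in> A (tdeg t)" using Phit_deg[OF G ph] t by blast
  have "op i (Phit op \<phi> t) (fillL op (\<phi> x) 0 (map (Phio op \<phi>) ws)) =
        fillL op (\<phi> x) 0 (map (Phio op \<phi>) (graft_list t (i - 0) ws))"
    by (rule fill_graft[OF G _ T t(2), of _ "dg x" _ X dg])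
       (use ph x wf len Node Phit_deg[OF G ph] in auto)
  then show ?case by (simp add: Phit_Node)
qed

lemma vs_add2: "graded_vs sc A \<Longrightarrow> sc c (x + y) = sc c x + sc c y" by (simp add: graded_vs_def)
lemma vs_add1: "graded_vs sc A \<Longrightarrow> sc (c + d) x = sc c x + sc d x" by (simp add: graded_vs_def)
lemma vs_mult: "graded_vs sc A \<Longrightarrow> sc c (sc d x) = sc (c * d) x" by (simp add: graded_vs_def)
lemma vs_one: "graded_vs sc A \<Longrightarrow> sc 1 x = x" by (simp add: graded_vs_def)
lemma vs_closed: "graded_vs sc A \<Longrightarrow> 0 \<in> A n \<and> (\<forall>x\<in>A n. \<forall>y\<in>A n. x + y \<in> A n) \<and> (\<forall>c. \<forall>x\<in>A n. sc c x \<in> A n)"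
  unfolding graded_vs_def by blast

lemma vs_zero1: assumes "graded_vs sc A" shows "sc 0 x = 0"
proof -
  have "sc (0 + 0) x = sc 0 x + sc 0 x" by (rule vs_add1[OF assms])
  then show ?thesis by simp
qed
lemma vs_zero2: assumes "graded_vs sc A" shows "sc c 0 = 0"
proof -
  have "sc c (0 + 0) = sc c 0 + sc c 0" by (rule vs_add2[OF assms])
  then show ?thesis by simp
qed
lemma vs_sum: assumes "graded_vs sc A" shows "sc c (sum F P) = (\<Sum>p\<in>P. sc c (F p))"
  by (induction P rule: infinite_finite_induct) (auto simp: vs_zero2[OF assms] vs_add2[OF assms])
lemma vs_sum_mem: assumes "graded_vs sc A" shows "finite P \<Longrightarrow> (\<And>p. p \<in> P \<Longrightarrow> F p \<in> A n) \<Longrightarrow> sum F P \<in> A n"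
  by (induction P rule: finite_induct) (use vs_closed[OF assms] in auto)

definition PhiL :: "('k::field \<Rightarrow> 'a::ab_group_add \<Rightarrow> 'a) \<Rightarrow> (nat \<Rightarrow> 'a \<Rightarrow> 'a \<Rightarrow> 'a) \<Rightarrow> ('x \<Rightarrow> 'a) \<Rightarrow> ('x tree \<Rightarrow> 'k) \<Rightarrow> 'a" where
  "PhiL sc op \<phi> f = (\<Sum>t\<in>spt f. sc (f t) (Phit op \<phi> t))"

lemma PhiL_gen:
  assumes V: "graded_vs sc A" and S: "finite S" "spt f \<subseteq> S"
  shows "PhiL sc op \<phi> f = (\<Sum>t\<in>S. sc (f t) (Phit op \<phi> t))"
  unfolding PhiL_def by (rule sum.mono_neutral_left) (use S vs_zero1[OF V] in \<open>auto simp: spt_def\<close>)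

lemma PhiL_add:
  assumes V: "graded_vs sc A" and "fs f" "fs g"
  shows "PhiL sc op \<phi> (f + g) = PhiL sc op \<phi> f + PhiL sc op \<phi> g"
proof -
  let ?S = "spt f \<union> spt g"
  have "PhiL sc op \<phi> (f + g) = (\<Sum>t\<in>?S. sc ((f + g) t) (Phit op \<phi> t))"
    by (rule PhiL_gen[OF V]) (use assms spt_add[of f g] in auto)
  also have "\<dots> = (\<Sum>t\<in>?S. sc (f t) (Phit op \<phi> t)) + (\<Sum>t\<in>?S. sc (g t) (Phit op \<phi> t))"
    by (simp add: vs_add1[OF V] sum.distrib)
  also have "\<dots> = PhiL sc op \<phi> f + PhiL sc op \<phi> g"
    using PhiL_gen[OF V, of ?S f] PhiL_gen[OF V, of ?S g] assms by auto
  finally show ?thesis .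
qed

lemma PhiL_tsc:
  assumes V: "graded_vs sc A" and "fs f"
  shows "PhiL sc op \<phi> (tsc c f) = sc c (PhiL sc op \<phi> f)"
proof -
  have "PhiL sc op \<phi> (tsc c f) = (\<Sum>t\<in>spt f. sc (tsc c f t) (Phit op \<phi> t))"
    by (rule PhiL_gen[OF V]) (use assms spt_tsc in auto)
  also have "\<dots> = sc c (PhiL sc op \<phi> f)"
    by (simp add: PhiL_def vs_sum[OF V] vs_mult[OF V])
  finally show ?thesis .
qed

lemma PhiL_basis:
  assumes V: "graded_vs sc A"
  shows "PhiL sc op \<phi> (basis_tree t) = Phit op \<phi> t"
  unfolding PhiL_def spt_basis by (simp add: vs_one[OF V] basis_tree_def)

lemma PhiL_KT:
  assumes G: "grafting_algebra sc A op" and ph: "\<forall>x\<in>X. \<phi> x \<in> A (dg x)" and f: "f \<in> KT X dg n"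
  shows "PhiL sc op \<phi> f \<in> A n"
  unfolding PhiL_def
proof (rule vs_sum_mem[OF ga_vs[OF G]])
  show "finite (spt f)" using KT_fs[OF f] .
  fix t assume "t \<in> spt f"
  then have t: "t \<in> Trees X dg n" by (rule KT_spt[OF f])
  then have "Phit op \<phi> t \<in> A n" using Phit_deg[OF G ph] by (auto simp: Trees_def)
  then show "sc (f t) (Phit op \<phi> t) \<in> A n" using vs_closed[OF ga_vs[OF G]] by blast
qed

lemma fillL_Leafs: "fillL op a k (replicate n None) = a"
  by (induction n arbitrary: k) auto

lemma Phit_corolla: "Phit op \<phi> (corolla dg x) = \<phi> x"
  by (simp add: corolla_def Phit_Node fillL_Leafs)

lemma Trees_inf_iff: "t \<in> Trees_inf X dg \<longleftrightarrow> t \<noteq> Leaf \<and> wf_tree X dg t \<and> tdeg t \<ge> 1"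
  by (auto simp: Trees_inf_def Trees_def)

lemma Trees_inf_iff2: "\<forall>x\<in>X. dg x \<ge> 1 \<Longrightarrow> t \<in> Trees_inf X dg \<longleftrightarrow> t \<noteq> Leaf \<and> wf_tree X dg t"
  unfolding Trees_inf_iff using nleaves_ge2[of X dg t] by (auto simp: tdeg_def)

lemma graft_list_Leafs: "graft_list s (j + r) (replicate j Leaf @ rest) = replicate j Leaf @ graft_list s r rest"
  by (induction j) auto

lemma gen_unique:
  assumes pos: "\<forall>x\<in>X. dg x \<ge> 1"
    and F: "\<forall>t\<in>Trees_inf X dg. \<forall>w\<in>Trees_inf X dg. \<forall>i\<le>tdeg w. F (graft t i w) = op i (F t) (F w)"
    and H: "\<forall>t\<in>Trees_inf X dg. \<forall>w\<in>Trees_inf X dg. \<forall>i\<le>tdeg w. H (graft t i w) = op i (H t) (H w)"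
    and c: "\<forall>x\<in>X. F (corolla dg x) = H (corolla dg x)"
  shows "t \<in> Trees_inf X dg \<Longrightarrow> F t = H t"
proof (induction t rule: measure_induct_rule[of size])
  case (less t)
  from less.prems obtain x ss where t: "t = Node x ss" and wf: "wf_tree X dg t"
    by (cases t) (auto simp: Trees_inf_iff)
  have x: "x \<in> X" and len: "length ss = dg x + 1" and wfs: "\<forall>s\<in>set ss. wf_tree X dg s" using wf t by auto
  show ?case
  proof (cases "\<exists>s\<in>set ss. s \<noteq> Leaf")
    case False
    then have "replicate (length ss) Leaf = ss" by (intro replicate_length_same) auto
    then have "t = corolla dg x" using t len by (simp add: corolla_def)
    then show ?thesis using c x by simp
  next
    case True
    then obtain ys s zs where ss: "ss = ys @ s # zs" and sL: "s \<noteq> Leaf" and ys: "\<forall>y\<in>set ys. \<not> y \<noteq> Leaf"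
      using split_list_first_prop[of ss "\<lambda>s. s \<noteq> Leaf"] by blast
    define j where "j = length ys"
    have ysr: "ys = replicate j Leaf" unfolding j_def using ys replicate_length_same[of ys Leaf] by auto
    define t' where "t' = Node x (replicate j Leaf @ Leaf # zs)"
    have gt: "graft s j t' = t"
      unfolding t'_def t ss ysr using graft_list_Leafs[of s j 0 "Leaf # zs"] by simp
    have wft': "wf_tree X dg t'" using wfs x len unfolding t'_def ss ysr by auto
    have t'in: "t' \<in> Trees_inf X dg" using wft' Trees_inf_iff2[OF pos] by (simp add: t'_def)
    have sin: "s \<in> Trees_inf X dg" using wfs sL Trees_inf_iff2[OF pos] ss by auto
    have jt': "j \<le> tdeg t'" by (simp add: t'_def tdeg_def sum_list_replicate)
    have szs: "size s < size t" using t ss by simp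
    have "size s > 0" using sL by (cases s) auto
    then have szt': "size t' < size t" using t ss ysr by (simp add: t'_def)
    have "F t = op j (F s) (F t')" using F sin t'in jt' gt by metis
    also have "\<dots> = op j (H s) (H t')" using less.IH szs szt' sin t'in by simp
    also have "\<dots> = H t" using H sin t'in jt' gt by metis
    finally show ?thesis .
  qed
qed

lemma KTi_fs: "f \<in> KT_inf X dg \<Longrightarrow> fs f" by (simp add: KT_inf_def spt_def)
lemma KTi_spt: "f \<in> KT_inf X dg \<Longrightarrow> t \<in> spt f \<Longrightarrow> t \<in> Trees_inf X dg" by (simp add: KT_inf_def spt_def)
lemma KTi_zero: "0 \<in> KT_inf X dg" by (simp add: KT_inf_def)
lemma KTi_add: "f \<in> KT_inf X dg \<Longrightarrow> g \<in> KT_inf X dg \<Longrightarrow> f + g \<in> KT_inf X dg"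
  unfolding KT_inf_def
proof (safe)
  assume "finite {t. f t \<noteq> 0}" "finite {t. g t \<noteq> 0}"
  then show "finite {t. (f + g) t \<noteq> 0}"
    by (rule rev_finite_subset[OF finite_Un[THEN iffD2], OF conjI]) auto
next
  fix t assume "\<forall>t. f t \<noteq> 0 \<longrightarrow> t \<in> Trees_inf X dg" "\<forall>t. g t \<noteq> 0 \<longrightarrow> t \<in> Trees_inf X dg"
    "(f + g) t \<noteq> 0"
  then show "t \<in> Trees_inf X dg" by (cases "f t = 0") auto
qed
lemma KTi_tsc: "f \<in> KT_inf X dg \<Longrightarrow> tsc c f \<in> KT_inf X dg"
  unfolding KT_inf_def by (auto elim: rev_finite_subset)
lemma KTi_basis: "t \<in> Trees_inf X dg \<Longrightarrow> (basis_tree t :: _ \<Rightarrow> 'k::field) \<in> KT_inf X dg"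
  by (simp add: KT_inf_def basis_tree_def)
lemma KTi_sum: "finite P \<Longrightarrow> (\<And>p. p \<in> P \<Longrightarrow> F p \<in> KT_inf X dg) \<Longrightarrow> sum F P \<in> KT_inf X dg"
  by (induction P rule: finite_induct) (auto intro: KTi_add KTi_zero)

lemma lin_expand:
  fixes \<Psi> :: "('x tree \<Rightarrow> 'k::field) \<Rightarrow> 'a::ab_group_add"
  assumes add: "\<forall>f\<in>KT_inf X dg. \<forall>g\<in>KT_inf X dg. \<Psi> (f + g) = \<Psi> f + \<Psi> g"
    and hom: "\<forall>c. \<forall>f\<in>KT_inf X dg. \<Psi> (tsc c f) = sc c (\<Psi> f)"
    and f: "f \<in> KT_inf X dg"
  shows "\<Psi> f = (\<Sum>t\<in>spt f. sc (f t) (\<Psi> (basis_tree t)))"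
proof -
  have z: "\<Psi> 0 = 0"
  proof -
    have "\<Psi> (0 + 0) = \<Psi> 0 + \<Psi> 0" using add KTi_zero by blast
    then show ?thesis by simp
  qed
  have gen: "finite S \<Longrightarrow> S \<subseteq> Trees_inf X dg \<Longrightarrow>
      \<Psi> (\<Sum>t\<in>S. tsc (c t) (basis_tree t)) = (\<Sum>t\<in>S. sc (c t) (\<Psi> (basis_tree t)))" for S c
  proof (induction S rule: finite_induct)
    case empty show ?case unfolding sum.empty by (rule z)
  next
    case (insert a S)
    have m1: "tsc (c a) (basis_tree a) \<in> KT_inf X dg" by (intro KTi_tsc KTi_basis) (use insert.prems in auto)
    have m2: "(\<Sum>t\<in>S. tsc (c t) (basis_tree t)) \<in> KT_inf X dg"
      using insert.hyps by (intro KTi_sum KTi_tsc KTi_basis) (use insert.prems in auto)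
    have e: "(\<Sum>t\<in>insert a S. tsc (c t) (basis_tree t)) = tsc (c a) (basis_tree a) + (\<Sum>t\<in>S. tsc (c t) (basis_tree t))"
      by (rule sum.insert) (use insert.hyps in auto)
    have e2: "(\<Sum>t\<in>insert a S. sc (c t) (\<Psi> (basis_tree t))) = sc (c a) (\<Psi> (basis_tree a)) + (\<Sum>t\<in>S. sc (c t) (\<Psi> (basis_tree t)))"
      by (rule sum.insert) (use insert.hyps in auto)
    have a1: "\<Psi> (tsc (c a) (basis_tree a) + (\<Sum>t\<in>S. tsc (c t) (basis_tree t))) =
          \<Psi> (tsc (c a) (basis_tree a)) + \<Psi> (\<Sum>t\<in>S. tsc (c t) (basis_tree t))"
      using add m1 m2 by blast
    have a2: "\<Psi> (tsc (c a) (basis_tree a)) = sc (c a) (\<Psi> (basis_tree a))"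
    proof -
      have "basis_tree a \<in> KT_inf X dg" using insert.prems by (intro KTi_basis) auto
      then show ?thesis using hom by blast
    qed
    have a3: "\<Psi> (\<Sum>t\<in>S. tsc (c t) (basis_tree t)) = (\<Sum>t\<in>S. sc (c t) (\<Psi> (basis_tree t)))"
      using insert.IH insert.prems by blast
    show ?case unfolding e e2 a1 a2 a3 ..
  qed
  have "\<Psi> f = \<Psi> (\<Sum>t\<in>spt f. tsc (f t) (basis_tree t))" by (rule arg_cong[where f=\<Psi>, OF basis_decomp[OF KTi_fs[OF f]]])
  also have "\<dots> = (\<Sum>t\<in>spt f. sc (f t) (\<Psi> (basis_tree t)))"
    using gen KTi_fs[OF f] KTi_spt[OF f] by blast
  finally show ?thesis .
qed

lemma wf_binary: "X = {x0} \<Longrightarrow> dg x0 = 1 \<Longrightarrow> wf_tree X dg t \<Longrightarrow> binary_tree t"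
  by (induction t) auto

theorem mainTheorem16:
  fixes X :: "'x set" and dg :: "'x \<Rightarrow> nat"
  assumes pos: "\<forall>x\<in>X. dg x \<ge> 1"
  shows
    "grafting_algebra (tsc :: 'k::field \<Rightarrow> _) (KT X dg) graft_op
     \<and>
     (\<forall>(sc :: 'k \<Rightarrow> 'a::ab_group_add \<Rightarrow> 'a) A op (\<phi> :: 'x \<Rightarrow> 'a).
        grafting_algebra sc A op \<longrightarrow> (\<forall>x\<in>X. \<phi> x \<in> A (dg x)) \<longrightarrow>
        (\<exists>\<Phi> :: ('x tree \<Rightarrow> 'k) \<Rightarrow> 'a.
           ((\<forall>f\<in>KT_inf X dg. \<forall>g\<in>KT_inf X dg. \<Phi> (f + g) = \<Phi> f + \<Phi> g) \<and>
            (\<forall>c. \<forall>f\<in>KT_inf X dg. \<Phi> (tsc c f) = sc c (\<Phi> f)) \<and>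
            (\<forall>n. \<forall>f\<in>KT X dg n. \<Phi> f \<in> A n) \<and>
            (\<forall>t\<in>Trees_inf X dg. \<forall>w\<in>Trees_inf X dg. \<forall>i\<le>tdeg w.
               \<Phi> (basis_tree (graft t i w)) = op i (\<Phi> (basis_tree t)) (\<Phi> (basis_tree w))) \<and>
            (\<forall>x\<in>X. \<Phi> (basis_tree (corolla dg x)) = \<phi> x))
           \<and>
           (\<forall>\<Psi> :: ('x tree \<Rightarrow> 'k) \<Rightarrow> 'a.
              ((\<forall>f\<in>KT_inf X dg. \<forall>g\<in>KT_inf X dg. \<Psi> (f + g) = \<Psi> f + \<Psi> g) \<and>
               (\<forall>c. \<forall>f\<in>KT_inf X dg. \<Psi> (tsc c f) = sc c (\<Psi> f)) \<and>
               (\<forall>n. \<forall>f\<in>KT X dg n. \<Psi> f \<in> A n) \<and>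
               (\<forall>t\<in>Trees_inf X dg. \<forall>w\<in>Trees_inf X dg. \<forall>i\<le>tdeg w.
                  \<Psi> (basis_tree (graft t i w)) = op i (\<Psi> (basis_tree t)) (\<Psi> (basis_tree w))) \<and>
               (\<forall>x\<in>X. \<Psi> (basis_tree (corolla dg x)) = \<phi> x))
              \<longrightarrow> (\<forall>f\<in>KT_inf X dg. \<Psi> f = \<Phi> f))))
     \<and>
     (\<forall>x0. X = {x0} \<and> dg x0 = 1 \<longrightarrow> (\<forall>t\<in>Trees_inf X dg. binary_tree t))"
proof (intro conjI)
  show "grafting_algebra (tsc :: 'k::field \<Rightarrow> _) (KT X dg) graft_op" by (rule KT_grafting)
next
  show "\<forall>x0. X = {x0} \<and> dg x0 = 1 \<longrightarrow> (\<forall>t\<in>Trees_inf X dg. binary_tree t)"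
  proof (intro allI impI ballI)
    fix x0 t assume h: "X = {x0} \<and> dg x0 = 1" and t: "t \<in> Trees_inf X dg"
    show "binary_tree t" by (rule wf_binary[of X x0 dg]) (use h t in \<open>auto simp: Trees_inf_iff\<close>)
  qed
next
  show "\<forall>(sc :: 'k \<Rightarrow> 'a::ab_group_add \<Rightarrow> 'a) A op (\<phi> :: 'x \<Rightarrow> 'a).
        grafting_algebra sc A op \<longrightarrow> (\<forall>x\<in>X. \<phi> x \<in> A (dg x)) \<longrightarrow>
        (\<exists>\<Phi> :: ('x tree \<Rightarrow> 'k) \<Rightarrow> 'a.
           ((\<forall>f\<in>KT_inf X dg. \<forall>g\<in>KT_inf X dg. \<Phi> (f + g) = \<Phi> f + \<Phi> g) \<and>
            (\<forall>c. \<forall>f\<in>KT_inf X dg. \<Phi> (tsc c f) = sc c (\<Phi> f)) \<and>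
            (\<forall>n. \<forall>f\<in>KT X dg n. \<Phi> f \<in> A n) \<and>
            (\<forall>t\<in>Trees_inf X dg. \<forall>w\<in>Trees_inf X dg. \<forall>i\<le>tdeg w.
               \<Phi> (basis_tree (graft t i w)) = op i (\<Phi> (basis_tree t)) (\<Phi> (basis_tree w))) \<and>
            (\<forall>x\<in>X. \<Phi> (basis_tree (corolla dg x)) = \<phi> x))
           \<and>
           (\<forall>\<Psi> :: ('x tree \<Rightarrow> 'k) \<Rightarrow> 'a.
              ((\<forall>f\<in>KT_inf X dg. \<forall>g\<in>KT_inf X dg. \<Psi> (f + g) = \<Psi> f + \<Psi> g) \<and>
               (\<forall>c. \<forall>f\<in>KT_inf X dg. \<Psi> (tsc c f) = sc c (\<Psi> f)) \<and>
               (\<forall>n. \<forall>f\<in>KT X dg n. \<Psi> f \<in> A n) \<and>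
               (\<forall>t\<in>Trees_inf X dg. \<forall>w\<in>Trees_inf X dg. \<forall>i\<le>tdeg w.
                  \<Psi> (basis_tree (graft t i w)) = op i (\<Psi> (basis_tree t)) (\<Psi> (basis_tree w))) \<and>
               (\<forall>x\<in>X. \<Psi> (basis_tree (corolla dg x)) = \<phi> x))
              \<longrightarrow> (\<forall>f\<in>KT_inf X dg. \<Psi> f = \<Phi> f)))"
  proof (intro allI impI)
    fix sc :: "'k \<Rightarrow> 'a \<Rightarrow> 'a" and A op and \<phi> :: "'x \<Rightarrow> 'a"
    assume G: "grafting_algebra sc A op" and ph: "\<forall>x\<in>X. \<phi> x \<in> A (dg x)"
    have V: "graded_vs sc A" by (rule ga_vs[OF G])
    let ?F = "PhiL sc op \<phi> :: ('x tree \<Rightarrow> 'k) \<Rightarrow> 'a"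
    have P1: "\<forall>f\<in>KT_inf X dg. \<forall>g\<in>KT_inf X dg. ?F (f + g) = ?F f + ?F g"
      using PhiL_add[OF V] KTi_fs by blast
    have P2: "\<forall>c. \<forall>f\<in>KT_inf X dg. ?F (tsc c f) = sc c (?F f)"
      using PhiL_tsc[OF V] KTi_fs by blast
    have P3: "\<forall>n. \<forall>f\<in>KT X dg n. ?F f \<in> A n"
      using PhiL_KT[OF G ph] by blast
    have Pg: "Phit op \<phi> (graft t i w) = op i (Phit op \<phi> t) (Phit op \<phi> w)"
      if t: "t \<in> Trees_inf X dg" and w: "w \<in> Trees_inf X dg" and i: "i \<le> tdeg w" for t w i
    proof -
      have "i < nleaves w" using w i nleaves_pos[of X dg w] by (auto simp: Trees_inf_iff tdeg_def)
      then show ?thesis using Phit_graft[OF G ph] t w by (auto simp: Trees_inf_iff)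
    qed
    have P4: "\<forall>t\<in>Trees_inf X dg. \<forall>w\<in>Trees_inf X dg. \<forall>i\<le>tdeg w.
               ?F (basis_tree (graft t i w)) = op i (?F (basis_tree t)) (?F (basis_tree w))"
      using Pg by (simp add: PhiL_basis[OF V])
    have P5: "\<forall>x\<in>X. ?F (basis_tree (corolla dg x)) = \<phi> x"
      by (simp add: PhiL_basis[OF V] Phit_corolla)
    have U: "\<forall>\<Psi> :: ('x tree \<Rightarrow> 'k) \<Rightarrow> 'a.
              ((\<forall>f\<in>KT_inf X dg. \<forall>g\<in>KT_inf X dg. \<Psi> (f + g) = \<Psi> f + \<Psi> g) \<and>
               (\<forall>c. \<forall>f\<in>KT_inf X dg. \<Psi> (tsc c f) = sc c (\<Psi> f)) \<and>
               (\<forall>n. \<forall>f\<in>KT X dg n. \<Psi> f \<in> A n) \<and>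
               (\<forall>t\<in>Trees_inf X dg. \<forall>w\<in>Trees_inf X dg. \<forall>i\<le>tdeg w.
                  \<Psi> (basis_tree (graft t i w)) = op i (\<Psi> (basis_tree t)) (\<Psi> (basis_tree w))) \<and>
               (\<forall>x\<in>X. \<Psi> (basis_tree (corolla dg x)) = \<phi> x))
              \<longrightarrow> (\<forall>f\<in>KT_inf X dg. \<Psi> f = ?F f)"
    proof (intro allI impI ballI)
      fix \<Psi> :: "('x tree \<Rightarrow> 'k) \<Rightarrow> 'a" and f :: "'x tree \<Rightarrow> 'k"
      assume H: "(\<forall>f\<in>KT_inf X dg. \<forall>g\<in>KT_inf X dg. \<Psi> (f + g) = \<Psi> f + \<Psi> g) \<and>
               (\<forall>c. \<forall>f\<in>KT_inf X dg. \<Psi> (tsc c f) = sc c (\<Psi> f)) \<and>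
               (\<forall>n. \<forall>f\<in>KT X dg n. \<Psi> f \<in> A n) \<and>
               (\<forall>t\<in>Trees_inf X dg. \<forall>w\<in>Trees_inf X dg. \<forall>i\<le>tdeg w.
                  \<Psi> (basis_tree (graft t i w)) = op i (\<Psi> (basis_tree t)) (\<Psi> (basis_tree w))) \<and>
               (\<forall>x\<in>X. \<Psi> (basis_tree (corolla dg x)) = \<phi> x)"
        and f: "f \<in> KT_inf X dg"
      have H1: "\<forall>f\<in>KT_inf X dg. \<forall>g\<in>KT_inf X dg. \<Psi> (f + g) = \<Psi> f + \<Psi> g"
        using H by (elim conjE) assumption
      have H2: "\<forall>c. \<forall>f\<in>KT_inf X dg. \<Psi> (tsc c f) = sc c (\<Psi> f)"
        using H by (elim conjE) assumption
      have H4: "\<forall>t\<in>Trees_inf X dg. \<forall>w\<in>Trees_inf X dg. \<forall>i\<le>tdeg w.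
                  \<Psi> (basis_tree (graft t i w)) = op i (\<Psi> (basis_tree t)) (\<Psi> (basis_tree w))"
        using H by (elim conjE) assumption
      have H5: "\<forall>x\<in>X. \<Psi> (basis_tree (corolla dg x)) = \<phi> x"
        using H by (elim conjE) assumption
      have B: "\<Psi> (basis_tree t) = Phit op \<phi> t" if t: "t \<in> Trees_inf X dg" for t
      proof (rule gen_unique[OF pos _ _ _ t, where op = op])
        show "\<forall>t\<in>Trees_inf X dg. \<forall>w\<in>Trees_inf X dg. \<forall>i\<le>tdeg w.
           \<Psi> (basis_tree (graft t i w)) = op i (\<Psi> (basis_tree t)) (\<Psi> (basis_tree w))" by (rule H4)
        show "\<forall>t\<in>Trees_inf X dg. \<forall>w\<in>Trees_inf X dg. \<forall>i\<le>tdeg w.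
           Phit op \<phi> (graft t i w) = op i (Phit op \<phi> t) (Phit op \<phi> w)" using Pg by blast
        show "\<forall>x\<in>X. \<Psi> (basis_tree (corolla dg x)) = Phit op \<phi> (corolla dg x)"
          using H5 by (simp add: Phit_corolla)
      qed
      have "\<Psi> f = (\<Sum>t\<in>spt f. sc (f t) (\<Psi> (basis_tree t)))" by (rule lin_expand[OF H1 H2 f])
      also have "\<dots> = (\<Sum>t\<in>spt f. sc (f t) (Phit op \<phi> t))"
        using B KTi_spt[OF f] by (intro sum.cong refl) auto
      also have "\<dots> = ?F f" by (simp add: PhiL_def)
      finally show "\<Psi> f = ?F f" .
    qed
    show "\<exists>\<Phi> :: ('x tree \<Rightarrow> 'k) \<Rightarrow> 'a.
           ((\<forall>f\<in>KT_inf X dg. \<forall>g\<in>KT_inf X dg. \<Phi> (f + g) = \<Phi> f + \<Phi> g) \<and>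
            (\<forall>c. \<forall>f\<in>KT_inf X dg. \<Phi> (tsc c f) = sc c (\<Phi> f)) \<and>
            (\<forall>n. \<forall>f\<in>KT X dg n. \<Phi> f \<in> A n) \<and>
            (\<forall>t\<in>Trees_inf X dg. \<forall>w\<in>Trees_inf X dg. \<forall>i\<le>tdeg w.
               \<Phi> (basis_tree (graft t i w)) = op i (\<Phi> (basis_tree t)) (\<Phi> (basis_tree w))) \<and>
            (\<forall>x\<in>X. \<Phi> (basis_tree (corolla dg x)) = \<phi> x))
           \<and>
           (\<forall>\<Psi> :: ('x tree \<Rightarrow> 'k) \<Rightarrow> 'a.
              ((\<forall>f\<in>KT_inf X dg. \<forall>g\<in>KT_inf X dg. \<Psi> (f + g) = \<Psi> f + \<Psi> g) \<and>
               (\<forall>c. \<forall>f\<in>KT_inf X dg. \<Psi> (tsc c f) = sc c (\<Psi> f)) \<and>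
               (\<forall>n. \<forall>f\<in>KT X dg n. \<Psi> f \<in> A n) \<and>
               (\<forall>t\<in>Trees_inf X dg. \<forall>w\<in>Trees_inf X dg. \<forall>i\<le>tdeg w.
                  \<Psi> (basis_tree (graft t i w)) = op i (\<Psi> (basis_tree t)) (\<Psi> (basis_tree w))) \<and>
               (\<forall>x\<in>X. \<Psi> (basis_tree (corolla dg x)) = \<phi> x))
              \<longrightarrow> (\<forall>f\<in>KT_inf X dg. \<Psi> f = \<Phi> f))"
      by (rule exI[of _ ?F], intro conjI P1 P2 P3 P4 P5 U)
  qed
qed

end
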